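(* Let $\mu$ be a positive finite Borel measure on $[0,1)$ and let $v,w$ be weights on $\mathbb{D}$. Assume that $1/v\in L_1([0,1),\mu)$ and that $w(r)\le1-r$ for every $0<r<1$. Then $I_\mu:H^\infty_v\to H^0_w$ is (well defined and) compact.
   Context: $\mathbb{D}$ is the open unit disc and $H(\mathbb{D})$ the holomorphic functions on $\mathbb{D}$. A weight is a function $v:\mathbb{D}\to(0,\infty)$ that is radial ($v(z)=v(|z|)$), continuous, non-increasing in $|z|$, with $\lim_{r\to1^-}v(r)=0$. $H^\infty_v=\{f\in H(\mathbb{D}):\|f\|_v:=\sup_zv(z)|f(z)|<\infty\}$ and $H^0_w=\{f\in H^\infty_w:\lim_{|z|\to1^-}w(z)|f(z)|=0\}$. $I_\mu(f)(z)=\int_0^1\frac{f(t)}{1-tz}\,d\mu(t)$ whenever this defines a holomorphic function on $\mathbb{D}$. *)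

theory Defs
  imports "HOL-Analysis.Analysis"
begin

definition weight :: "(complex \<Rightarrow> real) \<Rightarrow> bool" where
  "weight v \<longleftrightarrow>
     (\<forall>z\<in>ball 0 1. v z > 0) \<and>
     (\<forall>z\<in>ball 0 1. v z = v (complex_of_real (norm z))) \<and>
     continuous_on (ball 0 1) v \<and>
     (\<forall>z\<in>ball 0 1. \<forall>z'\<in>ball 0 1. norm z \<le> norm z' \<longrightarrow> v z' \<le> v z) \<and>
     ((\<lambda>r. v (complex_of_real r)) \<longlongrightarrow> 0) (at_left 1)"

text \<open>Weighted sup-norm \<open>\<parallel>f\<parallel>_v\<close> (meaningful for \<open>f \<in> Hinf v\<close>).\<close>
definition wnorm :: "(complex \<Rightarrow> real) \<Rightarrow> (complex \<Rightarrow> complex) \<Rightarrow> real" where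
  "wnorm v f = (SUP z\<in>ball 0 1. v z * norm (f z))"

definition Hinf :: "(complex \<Rightarrow> real) \<Rightarrow> (complex \<Rightarrow> complex) set" where
  "Hinf v = {f. f holomorphic_on ball 0 1 \<and> (\<exists>C. \<forall>z\<in>ball 0 1. v z * norm (f z) \<le> C)}"

definition H0 :: "(complex \<Rightarrow> real) \<Rightarrow> (complex \<Rightarrow> complex) set" where
  "H0 w = {f \<in> Hinf w. \<forall>e>0. \<exists>r<1. \<forall>z\<in>ball 0 1. r < norm z \<longrightarrow> w z * norm (f z) < e}"

text \<open>The operator \<open>I_\<mu>\<close>; \<open>M\<close> is a measure on \<open>[0,1)\<close>.\<close>
definition I_mu :: "real measure \<Rightarrow> (complex \<Rightarrow> complex) \<Rightarrow> complex \<Rightarrow> complex" where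
  "I_mu M f z = (LINT t|M. f (complex_of_real t) / (1 - complex_of_real t * z))"

definition I_mu_well_defined ::
  "real measure \<Rightarrow> (complex \<Rightarrow> real) \<Rightarrow> (complex \<Rightarrow> real) \<Rightarrow> bool" where
  "I_mu_well_defined M v w \<longleftrightarrow>
     (\<forall>f\<in>Hinf v. (\<forall>z\<in>ball 0 1.
          integrable M (\<lambda>t. f (complex_of_real t) / (1 - complex_of_real t * z)))
        \<and> I_mu M f \<in> H0 w)"

text \<open>Compactness (sequential form): every \<open>\<parallel>\<cdot>\<parallel>_v\<close>-bounded sequence in \<open>H^\<infinity>_v\<close> has
  a subsequence whose images converge in \<open>(H^0_w, \<parallel>\<cdot>\<parallel>_w)\<close>.\<close>
definition I_mu_compact ::
  "real measure \<Rightarrow> (complex \<Rightarrow> real) \<Rightarrow> (complex \<Rightarrow> real) \<Rightarrow> bool" where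
  "I_mu_compact M v w \<longleftrightarrow>
     (\<forall>fs :: nat \<Rightarrow> complex \<Rightarrow> complex. (\<forall>n. fs n \<in> Hinf v) \<and> (\<exists>C. \<forall>n. wnorm v (fs n) \<le> C) \<longrightarrow>
        (\<exists>r g. strict_mono r \<and> g \<in> H0 w \<and>
           (\<lambda>n. wnorm w (\<lambda>z. I_mu M (fs (r n)) z - g z)) \<longlonglongrightarrow> 0))"

end

theory Submission
  imports Defs "HOL-Complex_Analysis.Complex_Analysis"
begin

lemma weight_pos: "weight v \<Longrightarrow> z \<in> ball 0 1 \<Longrightarrow> v z > 0"
  unfolding weight_def by blast

lemma weight_mono: "weight v \<Longrightarrow> z \<in> ball 0 1 \<Longrightarrow> z' \<in> ball 0 1 \<Longrightarrow> norm z \<le> norm z' \<Longrightarrow> v z' \<le> v z"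
  unfolding weight_def by blast

lemma weight_rad: "weight v \<Longrightarrow> z \<in> ball 0 1 \<Longrightarrow> v z = v (complex_of_real (norm z))"
  unfolding weight_def by blast

lemma norm_one_minus_ge:
  fixes t :: real and z :: complex
  assumes "0 \<le> t" "t \<le> 1"
  shows "1 - t * norm z \<le> norm (1 - complex_of_real t * z)"
proof -
  have "norm (1::complex) - norm (complex_of_real t * z) \<le> norm (1 - complex_of_real t * z)"
    by (rule norm_triangle_ineq2)
  then show ?thesis using assms by (simp add: norm_mult)
qed

lemma one_minus_ge2:
  fixes t :: real and z :: complex
  assumes "0 \<le> t" "t \<le> 1" "norm z < 1"
  shows "1 - norm z \<le> 1 - t * norm z" "0 < 1 - t * norm z"
proof -
  have "t * norm z \<le> norm z" using assms by (simp add: mult_left_le_one_le)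
  then show "1 - norm z \<le> 1 - t * norm z" "0 < 1 - t * norm z" using assms by auto
qed

lemma alg0: fixes A B x hh h :: complex
  assumes "A \<noteq> 0" "B \<noteq> 0" "hh \<noteq> 0" "A = B - x*hh"
  shows "(h/A - h/B)/hh - h*x/B^2 = h*(x^2*hh)/(A*B^2)"
proof -
  have "(h/A - h/B)/hh - h*x/B^2 = (h*(B - A)/hh*B - h*x*A)/(A*B^2)"
    using assms(1-3) by (simp add: field_simps power2_eq_square)
  also have "\<dots> = h*(x^2*hh)/(A*B^2)"
    using assms(3) unfolding assms(4) by (simp add: field_simps power2_eq_square)
  finally show ?thesis .
qed

locale setting =
  fixes M :: "real measure" and v w :: "complex \<Rightarrow> real"
  assumes sp: "space M = {0..<1}"
    and st: "sets M = sets (restrict_space borel {0..<1::real})"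
    and wv: "weight v" and ww: "weight w"
    and iv: "integrable M (\<lambda>t. 1 / v (complex_of_real t))"
    and wle: "\<forall>r::real. 0 < r \<and> r < 1 \<longrightarrow> w (complex_of_real r) \<le> 1 - r"
begin

lemma meas: "continuous_on {0..<1} h \<Longrightarrow> h \<in> borel_measurable M"
  unfolding measurable_cong_sets[OF st refl] by (rule borel_measurable_continuous_on_restrict)

lemma ofreal_ball: "t \<in> space M \<Longrightarrow> complex_of_real t \<in> ball 0 1"
  using sp by auto

lemma int_bound:
  fixes g :: "real \<Rightarrow> 'b::{banach,second_countable_topology}"
  assumes "integrable M b" "g \<in> borel_measurable M" "\<And>t. t \<in> space M \<Longrightarrow> norm (g t) \<le> b t"
  shows "integrable M g" "norm (integral\<^sup>L M g) \<le> integral\<^sup>L M b"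
proof -
  show ig: "integrable M g"
  proof (rule Bochner_Integration.integrable_bound[OF assms(1,2)])
    show "AE x in M. norm (g x) \<le> norm (b x)"
    proof (rule AE_I2)
      fix x assume "x \<in> space M"
      then have "norm (g x) \<le> b x" by (rule assms(3))
      also have "b x \<le> norm (b x)" by simp
      finally show "norm (g x) \<le> norm (b x)" .
    qed
  qed
  show "norm (integral\<^sup>L M g) \<le> integral\<^sup>L M b"
    by (rule Bochner_Integration.integral_norm_bound_integral[OF ig assms(1) assms(3)])
qed

lemma W_bound:
  assumes "z \<in> ball 0 1"
  shows "w z / (1 - norm z) \<le> max 1 (w 0)"
proof (cases "z = 0")
  case True then show ?thesis by simp
next
  case False
  have "w z = w (complex_of_real (norm z))" using weight_rad[OF ww assms] .
  also have "\<dots> \<le> 1 - norm z" using wle False assms by auto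
  finally have "w z \<le> 1 - norm z" .
  moreover have "0 < 1 - norm z" using assms by auto
  ultimately have "w z / (1 - norm z) \<le> 1" by (simp add: pos_divide_le_eq)
  then show ?thesis by linarith
qed

lemma w_nonneg: "z \<in> ball 0 1 \<Longrightarrow> 0 \<le> w z"
  using weight_pos[OF ww] by (simp add: less_imp_le)

lemma Hinf_bound: "f \<in> Hinf v \<Longrightarrow> \<exists>B\<ge>0. \<forall>z\<in>ball 0 1. v z * norm (f z) \<le> B"
proof -
  assume "f \<in> Hinf v"
  then obtain C where "\<forall>z\<in>ball 0 1. v z * norm (f z) \<le> C" by (auto simp: Hinf_def)
  then show ?thesis by (intro exI[of _ "max C 0"]) auto
qed

lemma cont_real: "f holomorphic_on ball 0 1 \<Longrightarrow> continuous_on {0..<1} (\<lambda>t. f (complex_of_real t))"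
proof -
  assume "f holomorphic_on ball 0 1"
  then have "continuous_on (ball 0 1) f" by (rule holomorphic_on_imp_continuous_on)
  then show ?thesis
    by (rule continuous_on_compose2[where f = complex_of_real]) (auto intro: continuous_intros)
qed

lemma dom_int:
  assumes "continuous_on {0..<1} h" "\<And>t. t \<in> {0..<1} \<Longrightarrow> norm (h t) \<le> B * (1 / v (complex_of_real t))"
  shows "integrable M (\<lambda>t. norm (h t))"
proof (rule int_bound(1))
  show "integrable M (\<lambda>t. B * (1 / v (complex_of_real t)))" by (rule integrable_mult_right) (rule iv)
  show "(\<lambda>t. norm (h t)) \<in> borel_measurable M"
    by (rule meas) (use assms(1) in \<open>auto intro: continuous_intros\<close>)
  show "norm (norm (h t)) \<le> B * (1 / v (complex_of_real t))" if "t \<in> space M" for t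
    using assms(2)[of t] that sp by simp
qed

lemma Hinf_pt:
  assumes "\<forall>z\<in>ball 0 1. v z * norm (f z) \<le> B" "t \<in> {0..<1::real}"
  shows "norm (f (complex_of_real t)) \<le> B * (1 / v (complex_of_real t))"
proof -
  have z: "complex_of_real t \<in> ball 0 1" using assms(2) by auto
  have "v (complex_of_real t) > 0" using weight_pos[OF wv z] .
  moreover have "v (complex_of_real t) * norm (f (complex_of_real t)) \<le> B" using assms(1) z by blast
  ultimately show ?thesis by (simp add: pos_le_divide_eq mult.commute)
qed

lemma denom_pos:
  assumes "t \<in> {0..<1::real}" "norm z < 1"
  shows "0 < norm (1 - complex_of_real t * z)" "1 - norm z \<le> norm (1 - complex_of_real t * z)"
    "1 - complex_of_real t * z \<noteq> 0"
proof -
  have a: "1 - t * norm z \<le> norm (1 - complex_of_real t * z)"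
    by (rule norm_one_minus_ge) (use assms in auto)
  have b: "1 - norm z \<le> 1 - t * norm z" "0 < 1 - t * norm z"
    using one_minus_ge2[of t z] assms by auto
  show "0 < norm (1 - complex_of_real t * z)" "1 - norm z \<le> norm (1 - complex_of_real t * z)"
    using a b by auto
  then show "1 - complex_of_real t * z \<noteq> 0" by auto
qed

lemma cont_div:
  assumes "continuous_on {0..<1} h" "norm z < 1"
  shows "continuous_on {0..<1} (\<lambda>t. h t / (1 - complex_of_real t * z))"
  using assms denom_pos(3)[OF _ assms(2)] by (auto intro!: continuous_intros)

lemma core:
  assumes hc: "continuous_on {0..<1} h" and hi: "integrable M (\<lambda>t. norm (h t))"
    and z: "norm z < 1"
  shows core_int: "integrable M (\<lambda>t. h t / (1 - complex_of_real t * z))"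
    and core_int2: "integrable M (\<lambda>t. norm (h t) / (1 - t * norm z))"
    and core_bnd: "norm (LINT t|M. h t / (1 - complex_of_real t * z)) \<le> (LINT t|M. norm (h t) / (1 - t * norm z))"
    and core_bnd2: "(LINT t|M. norm (h t) / (1 - t * norm z)) \<le> (LINT t|M. norm (h t)) / (1 - norm z)"
proof -
  have b: "1 - norm z \<le> 1 - t * norm z" "0 < 1 - t * norm z" if "t \<in> {0..<1}" for t
    using one_minus_ge2[of t z] that z by auto
  have c2: "continuous_on {0..<1} (\<lambda>t. norm (h t) / (1 - t * norm z))"
  proof -
    have "\<forall>t\<in>{0..<1}. 1 - t * norm z \<noteq> 0" using b(2) by (metis less_irrefl)
    then show ?thesis using hc by (auto intro!: continuous_intros)
  qed
  have i1: "integrable M (\<lambda>t. norm (h t) / (1 - norm z))" using hi by auto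
  have le1: "norm (h t) / (1 - t * norm z) \<le> norm (h t) / (1 - norm z)" if "t \<in> {0..<1}" for t
    using b[OF that] z by (intro divide_left_mono) auto
  show i2: "integrable M (\<lambda>t. norm (h t) / (1 - t * norm z))"
  proof (rule int_bound(1)[OF i1 meas[OF c2]])
    fix t assume "t \<in> space M"
    then have t: "t \<in> {0..<1}" using sp by auto
    show "norm (norm (h t) / (1 - t * norm z)) \<le> norm (h t) / (1 - norm z)"
      using le1[OF t] b(2)[OF t] by simp
  qed
  have pt: "norm (h t / (1 - complex_of_real t * z)) \<le> norm (h t) / (1 - t * norm z)" if "t \<in> space M" for t
  proof -
    have t: "t \<in> {0..<1}" using that sp by auto
    have "1 - t * norm z \<le> norm (1 - complex_of_real t * z)"
      by (rule norm_one_minus_ge) (use t in auto)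
    then have "norm (h t) / norm (1 - complex_of_real t * z) \<le> norm (h t) / (1 - t * norm z)"
    proof (rule divide_left_mono)
      have "0 < 1 - t * norm z" using b(2)[OF t] .
      moreover have "0 < norm (1 - complex_of_real t * z)"
        using \<open>1 - t * norm z \<le> _\<close> calculation by linarith
      ultimately show "0 < norm (1 - complex_of_real t * z) * (1 - t * norm z)" by simp
    qed (use \<open>1 - t * norm z \<le> _\<close> in auto)
    then show ?thesis by (simp add: norm_divide)
  qed
  show "integrable M (\<lambda>t. h t / (1 - complex_of_real t * z))"
    using int_bound(1)[OF i2 meas[OF cont_div[OF hc z]] pt] .
  show "norm (LINT t|M. h t / (1 - complex_of_real t * z)) \<le> (LINT t|M. norm (h t) / (1 - t * norm z))"
    using int_bound(2)[OF i2 meas[OF cont_div[OF hc z]] pt] .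
  have "(LINT t|M. norm (h t) / (1 - t * norm z)) \<le> (LINT t|M. norm (h t) / (1 - norm z))"
    by (rule integral_mono[OF i2 i1]) (use le1 sp in auto)
  then show "(LINT t|M. norm (h t) / (1 - t * norm z)) \<le> (LINT t|M. norm (h t)) / (1 - norm z)"
    by simp
qed


lemma holo:
  assumes hc: "continuous_on {0..<1} h" and hi: "integrable M (\<lambda>t. norm (h t))"
  shows "(\<lambda>z. LINT t|M. h t / (1 - complex_of_real t * z)) holomorphic_on ball 0 1"
proof -
  define F where "F = (\<lambda>z. LINT t|M. h t / (1 - complex_of_real t * z))"
  define K where "K = (LINT t|M. norm (h t))"
  have "\<exists>f'. (F has_field_derivative f') (at z0)" if z0: "z0 \<in> ball 0 1" for z0
  proof -
    have nz0: "norm z0 < 1" using z0 by simp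
    define \<delta> where "\<delta> = (1 - norm z0)/2"
    define \<rho> where "\<rho> = (1 + norm z0)/2"
    have dpos: "\<delta> > 0" and r1: "\<rho> < 1" and rd: "norm z0 + \<delta> = \<rho>" using nz0 by (auto simp: \<delta>_def \<rho>_def field_simps)
    have nzB: "1 - complex_of_real t * z0 \<noteq> 0" if "t \<in> {0..<1}" for t
      using denom_pos(3)[OF that nz0] .
    have Bge: "1 - norm z0 \<le> norm (1 - complex_of_real t * z0)" if "t \<in> {0..<1}" for t
      using denom_pos(2)[OF that nz0] .
    define d where "d = (\<lambda>t. h t * complex_of_real t / (1 - complex_of_real t * z0)^2)"
    define D where "D = integral\<^sup>L M d"
    have dc: "continuous_on {0..<1} d"
      unfolding d_def using hc nzB by (auto intro!: continuous_intros)
    have di: "integrable M d"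
    proof (rule int_bound(1)[OF _ meas[OF dc]])
      show "integrable M (\<lambda>t. norm (h t) / (1 - norm z0)^2)" using hi by auto
      fix t assume "t \<in> space M"
      then have t: "t \<in> {0..<1}" using sp by auto
      have "norm (d t) = norm (h t) * (t / norm (1 - complex_of_real t * z0)^2)"
        using t by (simp add: d_def norm_mult norm_divide norm_power)
      also have "\<dots> \<le> norm (h t) * (1 / (1 - norm z0)^2)"
      proof (rule mult_left_mono)
        show "t / norm (1 - complex_of_real t * z0)^2 \<le> 1 / (1 - norm z0)^2"
          by (rule frac_le) (use t nz0 Bge[OF t] in \<open>auto intro: power_mono\<close>)
      qed simp
      finally show "norm (d t) \<le> norm (h t) / (1 - norm z0)^2" by simp
    qed
    define c where "c = K / ((1 - \<rho>) * (1 - norm z0)^2)"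
    have key: "norm ((F (z0 + hh) - F z0) / hh - D) \<le> norm hh * c"
      if hh: "hh \<noteq> 0" "norm hh < \<delta>" for hh
    proof -
      define z1 where "z1 = z0 + hh"
      have nz1: "norm z1 \<le> \<rho>" using norm_triangle_ineq[of z0 hh] hh rd by (simp add: z1_def)
      then have nz1': "norm z1 < 1" using r1 by simp
      have nzA: "1 - complex_of_real t * z1 \<noteq> 0" if "t \<in> {0..<1}" for t
        using denom_pos(3)[OF that nz1'] .
      have Age: "1 - \<rho> \<le> norm (1 - complex_of_real t * z1)" if "t \<in> {0..<1}" for t
        using denom_pos(2)[OF that nz1'] nz1 by linarith
      have a: "integrable M (\<lambda>t. h t / (1 - complex_of_real t * z1))" by (rule core_int[OF hc hi nz1'])
      have b: "integrable M (\<lambda>t. h t / (1 - complex_of_real t * z0))" by (rule core_int[OF hc hi nz0])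
      have ab: "integrable M (\<lambda>t. (h t / (1 - complex_of_real t * z1) - h t / (1 - complex_of_real t * z0)) / hh)"
        using a b by auto
      have eq1: "(F z1 - F z0) / hh - D =
          (LINT t|M. (h t / (1 - complex_of_real t * z1) - h t / (1 - complex_of_real t * z0)) / hh - d t)"
        using Bochner_Integration.integral_diff[OF ab di] Bochner_Integration.integral_diff[OF a b] by (simp add: F_def D_def)
      define E where "E = (\<lambda>t. h t * ((complex_of_real t)^2 * hh) /
          ((1 - complex_of_real t * z1) * (1 - complex_of_real t * z0)^2))"
      have eq2: "(LINT t|M. (h t / (1 - complex_of_real t * z1) - h t / (1 - complex_of_real t * z0)) / hh - d t)
          = integral\<^sup>L M E"
      proof (rule Bochner_Integration.integral_cong[OF refl])
        fix t assume "t \<in> space M"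
        then have t: "t \<in> {0..<1}" using sp by auto
        have A: "1 - complex_of_real t * z1 \<noteq> 0" using nzA[OF t] .
        have B: "1 - complex_of_real t * z0 \<noteq> 0" using nzB[OF t] .
        show "(h t / (1 - complex_of_real t * z1) - h t / (1 - complex_of_real t * z0)) / hh - d t = E t"
          unfolding E_def d_def
          by (rule alg0[OF A B hh(1)]) (simp add: z1_def algebra_simps)
      qed
      have Ec: "continuous_on {0..<1} E"
        unfolding E_def using hc nzA nzB by (auto intro!: continuous_intros)
      have Eb: "norm (E t) \<le> norm (h t) * (norm hh / ((1 - \<rho>) * (1 - norm z0)^2))" if "t \<in> space M" for t
      proof -
        have t: "t \<in> {0..<1}" using that sp by auto
        have "norm (E t) = norm (h t) * (t^2 * norm hh / (norm (1 - complex_of_real t * z1) * norm (1 - complex_of_real t * z0)^2))"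
          by (simp add: E_def norm_mult norm_divide norm_power)
        also have "\<dots> \<le> norm (h t) * (norm hh / ((1 - \<rho>) * (1 - norm z0)^2))"
        proof (rule mult_left_mono)
          have t2: "t^2 \<le> 1" using t by (simp add: power_le_one)
          show "t^2 * norm hh / (norm (1 - complex_of_real t * z1) * norm (1 - complex_of_real t * z0)^2)
              \<le> norm hh / ((1 - \<rho>) * (1 - norm z0)^2)"
          proof (rule frac_le)
            show "t^2 * norm hh \<le> norm hh" using t2 by (simp add: mult_left_le_one_le)
            show "0 < (1 - \<rho>) * (1 - norm z0)^2" using r1 nz0 by simp
            show "(1 - \<rho>) * (1 - norm z0)^2 \<le> norm (1 - complex_of_real t * z1) * norm (1 - complex_of_real t * z0)^2"
              by (rule mult_mono) (use Age[OF t] Bge[OF t] r1 nz0 in \<open>auto intro: power_mono\<close>)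
          qed simp
        qed simp
        finally show ?thesis .
      qed
      have "norm (integral\<^sup>L M E) \<le> (LINT t|M. norm (h t) * (norm hh / ((1 - \<rho>) * (1 - norm z0)^2)))"
        by (rule int_bound(2)[OF _ meas[OF Ec] Eb]) (use hi in auto)
      also have "\<dots> = norm hh * c" by (simp add: c_def K_def)
      finally show ?thesis using eq1 eq2 by (simp add: z1_def)
    qed
    have "((\<lambda>hh. (F (z0 + hh) - F z0) / hh - D) \<longlongrightarrow> 0) (at 0)"
    proof (rule Lim_null_comparison)
      show "\<forall>\<^sub>F hh in at 0. norm ((F (z0 + hh) - F z0) / hh - D) \<le> norm hh * c"
        unfolding eventually_at using dpos key by (intro exI[of _ \<delta>]) auto
      show "((\<lambda>hh. norm hh * c) \<longlongrightarrow> 0) (at 0)"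
        by (intro tendsto_mult_left_zero tendsto_norm_zero tendsto_ident_at)
    qed
    then have "(F has_field_derivative D) (at z0)"
      unfolding DERIV_def by (subst LIM_zero_iff[symmetric]) simp
    then show ?thesis by blast
  qed
  then have "F holomorphic_on ball 0 1" by (simp add: holomorphic_on_open)
  then show ?thesis by (simp add: F_def)
qed


lemma wd:
  assumes f: "f \<in> Hinf v"
  shows "\<forall>z\<in>ball 0 1. integrable M (\<lambda>t. f (complex_of_real t) / (1 - complex_of_real t * z))"
    and "I_mu M f \<in> H0 w"
proof -
  obtain B where B: "B \<ge> 0" "\<forall>z\<in>ball 0 1. v z * norm (f z) \<le> B" using Hinf_bound[OF f] by blast
  define h where "h = (\<lambda>t. f (complex_of_real t))"
  have hol: "f holomorphic_on ball 0 1" using f by (simp add: Hinf_def)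
  have hc: "continuous_on {0..<1} h" unfolding h_def by (rule cont_real[OF hol])
  have hi: "integrable M (\<lambda>t. norm (h t))"
    by (rule dom_int[OF hc]) (use Hinf_pt[OF B(2)] in \<open>simp add: h_def\<close>)
  show "\<forall>z\<in>ball 0 1. integrable M (\<lambda>t. f (complex_of_real t) / (1 - complex_of_real t * z))"
    using core_int[OF hc hi] by (simp add: h_def)
  define K where "K = (LINT t|M. norm (h t))"
  have IF: "I_mu M f = (\<lambda>z. LINT t|M. h t / (1 - complex_of_real t * z))"
    by (simp add: I_mu_def h_def fun_eq_iff)
  have Fb: "norm (I_mu M f z) \<le> K / (1 - norm z)" if "norm z < 1" for z
    using core_bnd[OF hc hi that] core_bnd2[OF hc hi that] by (simp add: IF K_def)
  have Fb2: "norm (I_mu M f z) \<le> (LINT t|M. norm (h t) / (1 - t * norm z))" if "norm z < 1" for z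
    using core_bnd[OF hc hi that] by (simp add: IF)
  have K0: "K \<ge> 0" unfolding K_def by (rule Bochner_Integration.integral_nonneg) simp
  have hw: "I_mu M f \<in> Hinf w"
    unfolding Hinf_def
  proof (intro CollectI conjI exI ballI)
    show "I_mu M f holomorphic_on ball 0 1" using holo[OF hc hi] by (simp add: IF)
    fix z :: complex assume z: "z \<in> ball 0 1"
    have "w z * norm (I_mu M f z) \<le> w z * (K / (1 - norm z))"
      by (rule mult_left_mono[OF Fb w_nonneg[OF z]]) (use z in simp)
    also have "\<dots> = (w z / (1 - norm z)) * K" by simp
    also have "\<dots> \<le> max 1 (w 0) * K" by (rule mult_right_mono[OF W_bound[OF z] K0])
    finally show "w z * norm (I_mu M f z) \<le> max 1 (w 0) * K" .
  qed
  show "I_mu M f \<in> H0 w"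
    unfolding H0_def
  proof (intro CollectI conjI hw)
    show "\<forall>e>0. \<exists>r<1. \<forall>z\<in>ball 0 1. r < norm z \<longrightarrow> w z * norm (I_mu M f z) < e"
    proof (rule ccontr)
      assume "\<not> (\<forall>e>0. \<exists>r<1. \<forall>z\<in>ball 0 1. r < norm z \<longrightarrow> w z * norm (I_mu M f z) < e)"
      then obtain e where e: "e > 0"
        and H0: "\<forall>r<1. \<exists>z\<in>ball 0 1. r < norm z \<and> e \<le> w z * norm (I_mu M f z)"
        by (auto simp: not_less) (meson not_le)
      have H: "\<exists>z\<in>ball 0 1. r < norm z \<and> e \<le> w z * norm (I_mu M f z)" if "r < 1" for r
        using H0 that by blast
      have "\<forall>n. \<exists>z. z \<in> ball 0 1 \<and> 1 - 1 / real (Suc n) < norm z \<and> e \<le> w z * norm (I_mu M f z)"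
      proof
        fix n
        have "1 - 1 / real (Suc n) < 1" by simp
        from H[OF this] show "\<exists>z. z \<in> ball 0 1 \<and> 1 - 1 / real (Suc n) < norm z \<and> e \<le> w z * norm (I_mu M f z)"
          by blast
      qed
      then obtain zs where zs: "\<And>n. zs n \<in> ball 0 1" "\<And>n. 1 - 1 / real (Suc n) < norm (zs n)"
        "\<And>n. e \<le> w (zs n) * norm (I_mu M f (zs n))" by metis
      have nz: "norm (zs n) < 1" for n using zs(1)[of n] by simp
      have nzpos: "0 < norm (zs n)" for n
      proof -
        have "0 \<le> 1 - 1 / real (Suc n)" by (simp add: field_simps)
        then show ?thesis using zs(2)[of n] by linarith
      qed
      define s where "s = (\<lambda>n t. norm (h t) * ((1 - norm (zs n)) / (1 - t * norm (zs n))))"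
      have den: "0 < 1 - t * norm (zs n)" "1 - t \<le> 1 - t * norm (zs n)" "1 - norm (zs n) \<le> 1 - t * norm (zs n)"
        if "t \<in> {0..<1}" for t n
      proof -
        have "t * norm (zs n) \<le> t * 1" using that nz[of n] by (intro mult_left_mono) auto
        moreover have "t * norm (zs n) \<le> norm (zs n)" using that nz[of n] by (simp add: mult_left_le_one_le)
        ultimately show "0 < 1 - t * norm (zs n)" "1 - t \<le> 1 - t * norm (zs n)" "1 - norm (zs n) \<le> 1 - t * norm (zs n)"
          using that nz[of n] by auto
      qed
      have sle: "e \<le> integral\<^sup>L M (s n)" for n
      proof -
        have z0: "zs n \<noteq> 0" using nzpos[of n] by auto
        have "w (zs n) = w (complex_of_real (norm (zs n)))" by (rule weight_rad[OF ww zs(1)])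
        also have "\<dots> \<le> 1 - norm (zs n)" using wle nzpos[of n] nz[of n] by auto
        finally have wz: "w (zs n) \<le> 1 - norm (zs n)" .
        have "e \<le> w (zs n) * norm (I_mu M f (zs n))" by (rule zs(3))
        also have "\<dots> \<le> (1 - norm (zs n)) * norm (I_mu M f (zs n))" by (rule mult_right_mono[OF wz]) simp
        also have "\<dots> \<le> (1 - norm (zs n)) * (LINT t|M. norm (h t) / (1 - t * norm (zs n)))"
          by (rule mult_left_mono[OF Fb2[OF nz]]) (use nz[of n] in simp)
        also have "\<dots> = (LINT t|M. (1 - norm (zs n)) * (norm (h t) / (1 - t * norm (zs n))))"
          by (rule integral_mult_right_zero[symmetric])
        also have "\<dots> = integral\<^sup>L M (s n)"
          by (rule Bochner_Integration.integral_cong[OF refl]) (simp add: s_def)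
        finally show ?thesis .
      qed
      have lim: "(\<lambda>n. integral\<^sup>L M (s n)) \<longlonglongrightarrow> integral\<^sup>L M (\<lambda>t. 0::real)"
      proof (rule integral_dominated_convergence[where w = "\<lambda>t. norm (h t)"])
        show "(\<lambda>t. 0::real) \<in> borel_measurable M" by simp
        show "s n \<in> borel_measurable M" for n
        proof (rule meas)
          have "\<forall>t\<in>{0..<1}. 1 - t * norm (zs n) \<noteq> 0" using den(1) by (metis less_irrefl)
          then show "continuous_on {0..<1} (s n)"
            unfolding s_def using hc by (auto intro!: continuous_intros)
        qed
        show "integrable M (\<lambda>t. norm (h t))" by (rule hi)
        show "AE t in M. (\<lambda>n. s n t) \<longlonglongrightarrow> 0"
        proof (rule AE_I2)
          fix t assume "t \<in> space M"
          then have t: "t \<in> {0..<1}" using sp by auto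
          show "(\<lambda>n. s n t) \<longlonglongrightarrow> 0"
          proof (rule Lim_null_comparison[where g = "\<lambda>n. norm (h t) * (inverse (real (Suc n)) / (1 - t))"])
            show "\<forall>\<^sub>F n in sequentially. norm (s n t) \<le> norm (h t) * (inverse (real (Suc n)) / (1 - t))"
            proof (rule always_eventually, rule allI)
              fix n
              have q: "(1 - norm (zs n)) / (1 - t * norm (zs n)) \<le> inverse (real (Suc n)) / (1 - t)"
              proof (rule frac_le)
                show "0 \<le> inverse (real (Suc n))" by simp
                show "1 - norm (zs n) \<le> inverse (real (Suc n))"
                  using zs(2)[of n] by (simp add: inverse_eq_divide)
                show "0 < 1 - t" using t by simp
                show "1 - t \<le> 1 - t * norm (zs n)" using den(2)[OF t] .
              qed
              have q0: "0 \<le> (1 - norm (zs n)) / (1 - t * norm (zs n))"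
                using den(1)[OF t, of n] nz[of n] by simp
              have "0 \<le> s n t" unfolding s_def using q0 by (intro mult_nonneg_nonneg norm_ge_zero)
              then have "norm (s n t) = s n t" by simp
              then have "norm (s n t) = norm (h t) * ((1 - norm (zs n)) / (1 - t * norm (zs n)))"
                by (simp only: s_def)
              also have "\<dots> \<le> norm (h t) * (inverse (real (Suc n)) / (1 - t))"
                by (rule mult_left_mono[OF q]) simp
              finally show "norm (s n t) \<le> norm (h t) * (inverse (real (Suc n)) / (1 - t))" .
            qed
            show "(\<lambda>n. norm (h t) * (inverse (real (Suc n)) / (1 - t))) \<longlonglongrightarrow> 0"
              by (intro tendsto_mult_right_zero tendsto_divide_zero LIMSEQ_inverse_real_of_nat)
          qed
        qed
        show "AE t in M. norm (s n t) \<le> norm (h t)" for n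
        proof (rule AE_I2)
          fix t assume "t \<in> space M"
          then have t: "t \<in> {0..<1}" using sp by auto
          have q0: "0 \<le> (1 - norm (zs n)) / (1 - t * norm (zs n))"
            using den(1)[OF t, of n] nz[of n] by simp
          have q1: "(1 - norm (zs n)) / (1 - t * norm (zs n)) \<le> 1"
            using den(1)[OF t, of n] den(3)[OF t, of n] by simp
          have "0 \<le> s n t" unfolding s_def using q0 by (intro mult_nonneg_nonneg norm_ge_zero)
          then have "norm (s n t) = s n t" by simp
          then have "norm (s n t) = norm (h t) * ((1 - norm (zs n)) / (1 - t * norm (zs n)))"
            by (simp only: s_def)
          also have "\<dots> \<le> norm (h t) * 1" by (rule mult_left_mono[OF q1]) simp
          finally show "norm (s n t) \<le> norm (h t)" by simp
        qed
      qed
      then have "e \<le> 0"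
        using sle by (intro LIMSEQ_le_const[where X = "\<lambda>n. integral\<^sup>L M (s n)"]) auto
      with e show False by simp
    qed
  qed
qed


lemma cpt: "I_mu_compact M v w"
  unfolding I_mu_compact_def
proof (intro allI impI)
  fix fs :: "nat \<Rightarrow> complex \<Rightarrow> complex"
  assume "(\<forall>n. fs n \<in> Hinf v) \<and> (\<exists>C. \<forall>n. wnorm v (fs n) \<le> C)"
  then obtain C where fsH: "\<And>n. fs n \<in> Hinf v" and C: "\<And>n. wnorm v (fs n) \<le> C" by blast
  have bnd: "v z * norm (fs n z) \<le> C" if z: "z \<in> ball 0 1" for n z
  proof -
    obtain B where "\<forall>z\<in>ball 0 1. v z * norm (fs n z) \<le> B" using fsH[of n] by (auto simp: Hinf_def)
    then have "bdd_above ((\<lambda>z. v z * norm (fs n z)) ` ball 0 1)" by (intro bdd_aboveI2) auto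
    then have "v z * norm (fs n z) \<le> wnorm v (fs n)" unfolding wnorm_def by (rule cSUP_upper[OF z])
    with C[of n] show ?thesis by linarith
  qed
  have C0: "0 \<le> C"
  proof -
    have "0 \<le> v 0 * norm (fs 0 0)" using weight_pos[OF wv, of 0] by simp
    then show ?thesis using bnd[of 0 0] by simp
  qed
  have fhol: "fs n holomorphic_on ball 0 1" for n using fsH[of n] by (simp add: Hinf_def)
  have bdd: "\<exists>B. \<forall>h\<in>range fs. \<forall>z\<in>K. norm (h z) \<le> B" if K: "compact K" "K \<subseteq> ball 0 1" for K
  proof (cases "K = {}")
    case True then show ?thesis by auto
  next
    case False
    obtain x where x: "x \<in> K" "\<forall>y\<in>K. norm y \<le> norm x"
      using continuous_attains_sup[OF K(1) False, of norm] by (auto intro: continuous_intros)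
    have xb: "x \<in> ball 0 1" using K x by auto
    have vx: "v x > 0" by (rule weight_pos[OF wv xb])
    show ?thesis
    proof (intro exI[of _ "C / v x"] ballI)
      fix h z assume "h \<in> range fs" "z \<in> K"
      then obtain n where hn: "h = fs n" by auto
      have zb: "z \<in> ball 0 1" using K \<open>z \<in> K\<close> by auto
      have vz: "v z > 0" by (rule weight_pos[OF wv zb])
      have vxz: "v x \<le> v z" by (rule weight_mono[OF wv zb xb]) (use x \<open>z \<in> K\<close> in auto)
      have "norm (h z) \<le> C / v z" using bnd[OF zb, of n] vz hn by (simp add: pos_le_divide_eq mult.commute)
      also have "\<dots> \<le> C / v x" using C0 vx vxz by (intro divide_left_mono) auto
      finally show "norm (h z) \<le> C / v x" .
    qed
  qed
  obtain g r where g: "g holomorphic_on ball 0 1" "strict_mono r"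
    "\<And>x. x \<in> ball 0 1 \<Longrightarrow> (\<lambda>n. fs (r n) x) \<longlonglongrightarrow> g x"
  proof -
    have hH: "\<And>h. h \<in> range fs \<Longrightarrow> h holomorphic_on ball 0 1" using fhol by auto
    show ?thesis
    proof (rule Montel[where S="ball 0 1" and \<H>="range fs" and \<F>=fs])
      show "open (ball (0::complex) 1)" by simp
    next
      fix h assume "h \<in> range fs" then show "h holomorphic_on ball 0 1" by (rule hH)
    next
      fix K :: "complex set" assume "compact K" "K \<subseteq> ball 0 1"
      then show "\<exists>B. \<forall>h\<in>range fs. \<forall>z\<in>K. norm (h z) \<le> B" by (rule bdd)
    next
      show "range fs \<subseteq> range fs" by simp
    next
      fix g :: "complex \<Rightarrow> complex" and r :: "nat \<Rightarrow> nat"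
      assume "g holomorphic_on ball 0 1" "strict_mono r"
        "\<And>x. x \<in> ball 0 1 \<Longrightarrow> (\<lambda>n. fs (r n) x) \<longlonglongrightarrow> g x"
        "\<And>K. \<lbrakk>compact K; K \<subseteq> ball 0 1\<rbrakk> \<Longrightarrow> uniform_limit K (fs \<circ> r) g sequentially"
      then show thesis using that by blast
    qed
  qed
  have gb: "v z * norm (g z) \<le> C" if z: "z \<in> ball 0 1" for z
  proof -
    have "(\<lambda>n. v z * norm (fs (r n) z)) \<longlonglongrightarrow> v z * norm (g z)"
      by (intro tendsto_mult_left tendsto_norm g(3)[OF z])
    then show ?thesis using bnd[OF z] by (intro LIMSEQ_le_const2) auto
  qed
  have gH: "g \<in> Hinf v" unfolding Hinf_def using g(1) gb by blast
  define G where "G = I_mu M g"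
  have GH: "G \<in> H0 w" unfolding G_def by (rule wd(2)[OF gH])
  define dn where "dn = (\<lambda>n t. fs (r n) (complex_of_real t) - g (complex_of_real t))"
  have dc: "continuous_on {0..<1} (dn n)" for n
    unfolding dn_def by (intro continuous_on_diff cont_real fhol g(1))
  have dbnd: "norm (dn n t) \<le> (2 * C) * (1 / v (complex_of_real t))" if t: "t \<in> {0..<1}" for n t
  proof -
    have "norm (dn n t) \<le> norm (fs (r n) (complex_of_real t)) + norm (g (complex_of_real t))"
      unfolding dn_def by (rule norm_triangle_ineq4)
    also have "\<dots> \<le> C * (1 / v (complex_of_real t)) + C * (1 / v (complex_of_real t))"
      by (intro add_mono Hinf_pt[OF _ t]) (use bnd gb in auto)
    finally show ?thesis by simp
  qed
  have di: "integrable M (\<lambda>t. norm (dn n t))" for n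
    by (rule dom_int[OF dc dbnd])
  define Dn where "Dn = (\<lambda>n. LINT t|M. norm (dn n t))"
  have D0: "0 \<le> Dn n" for n unfolding Dn_def by (rule Bochner_Integration.integral_nonneg) simp
  have Dlim: "Dn \<longlonglongrightarrow> 0"
  proof -
    have "(\<lambda>n. LINT t|M. norm (dn n t)) \<longlonglongrightarrow> integral\<^sup>L M (\<lambda>t. 0::real)"
    proof (rule integral_dominated_convergence[where w = "\<lambda>t. (2 * C) * (1 / v (complex_of_real t))"])
      show "(\<lambda>t. 0::real) \<in> borel_measurable M" by simp
      show "(\<lambda>t. norm (dn n t)) \<in> borel_measurable M" for n
        by (rule meas) (use dc in \<open>auto intro: continuous_intros\<close>)
      show "integrable M (\<lambda>t. (2 * C) * (1 / v (complex_of_real t)))"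
        by (rule integrable_mult_right) (rule iv)
      show "AE t in M. (\<lambda>n. norm (dn n t)) \<longlonglongrightarrow> 0"
      proof (rule AE_I2)
        fix t assume "t \<in> space M"
        then have tb: "complex_of_real t \<in> ball 0 1" by (rule ofreal_ball)
        have "(\<lambda>n. dn n t) \<longlonglongrightarrow> 0"
          unfolding dn_def using g(3)[OF tb] by (simp add: LIM_zero)
        then show "(\<lambda>n. norm (dn n t)) \<longlonglongrightarrow> 0" by (rule tendsto_norm_zero)
      qed
      show "AE t in M. norm (norm (dn n t)) \<le> (2 * C) * (1 / v (complex_of_real t))" for n
        by (rule AE_I2) (use dbnd sp in auto)
    qed
    then show ?thesis by (simp add: Dn_def)
  qed
  define W where "W = max 1 (w 0)"
  have ptb: "w z * norm (I_mu M (fs (r n)) z - G z) \<le> W * Dn n" if z: "z \<in> ball 0 1" for n z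
  proof -
    have nz: "norm z < 1" using z by simp
    have ia: "integrable M (\<lambda>t. fs (r n) (complex_of_real t) / (1 - complex_of_real t * z))"
      using wd(1)[OF fsH[of "r n"]] z by blast
    have ib: "integrable M (\<lambda>t. g (complex_of_real t) / (1 - complex_of_real t * z))"
      using wd(1)[OF gH] z by blast
    have eq: "I_mu M (fs (r n)) z - G z = (LINT t|M. dn n t / (1 - complex_of_real t * z))"
      unfolding G_def I_mu_def dn_def diff_divide_distrib
      by (rule Bochner_Integration.integral_diff[OF ia ib, symmetric])
    have "norm (I_mu M (fs (r n)) z - G z) \<le> Dn n / (1 - norm z)"
      using order_trans[OF core_bnd[OF dc[of n] di[of n] nz] core_bnd2[OF dc[of n] di[of n] nz]] eq
      by (simp add: Dn_def)
    then have "w z * norm (I_mu M (fs (r n)) z - G z) \<le> w z * (Dn n / (1 - norm z))"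
      by (rule mult_left_mono) (rule w_nonneg[OF z])
    also have "\<dots> = (w z / (1 - norm z)) * Dn n" by simp
    also have "\<dots> \<le> W * Dn n" unfolding W_def by (rule mult_right_mono[OF W_bound[OF z] D0])
    finally show ?thesis .
  qed
  have wn_le: "wnorm w (\<lambda>z. I_mu M (fs (r n)) z - G z) \<le> W * Dn n" for n
    unfolding wnorm_def by (rule cSUP_least) (use ptb in auto)
  have wn_ge: "0 \<le> wnorm w (\<lambda>z. I_mu M (fs (r n)) z - G z)" for n
  proof -
    have z0: "(0::complex) \<in> ball 0 1" by simp
    have "bdd_above ((\<lambda>z. w z * norm (I_mu M (fs (r n)) z - G z)) ` ball 0 1)"
      using ptb by (intro bdd_aboveI2) auto
    then have "w 0 * norm (I_mu M (fs (r n)) 0 - G 0) \<le> wnorm w (\<lambda>z. I_mu M (fs (r n)) z - G z)"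
      unfolding wnorm_def by (rule cSUP_upper[OF z0])
    moreover have "0 \<le> w 0 * norm (I_mu M (fs (r n)) 0 - G 0)" using w_nonneg[OF z0] by simp
    ultimately show ?thesis by linarith
  qed
  have "(\<lambda>n. wnorm w (\<lambda>z. I_mu M (fs (r n)) z - G z)) \<longlonglongrightarrow> 0"
  proof (rule tendsto_sandwich[where f = "\<lambda>n. 0" and h = "\<lambda>n. W * Dn n"])
    show "\<forall>\<^sub>F n in sequentially. 0 \<le> wnorm w (\<lambda>z. I_mu M (fs (r n)) z - G z)"
      using wn_ge by simp
    show "\<forall>\<^sub>F n in sequentially. wnorm w (\<lambda>z. I_mu M (fs (r n)) z - G z) \<le> W * Dn n"
      using wn_le by simp
    show "(\<lambda>n. 0::real) \<longlonglongrightarrow> 0" by simp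
    show "(\<lambda>n. W * Dn n) \<longlonglongrightarrow> 0" by (rule tendsto_mult_right_zero[OF Dlim])
  qed
  then show "\<exists>r g. strict_mono r \<and> g \<in> H0 w \<and> (\<lambda>n. wnorm w (\<lambda>z. I_mu M (fs (r n)) z - g z)) \<longlonglongrightarrow> 0"
    using g(2) GH by blast
qed

end

theorem corollary13:
  fixes M :: "real measure" and v w :: "complex \<Rightarrow> real"
  assumes "finite_measure M"
    and "space M = {0..<1}"
    and "sets M = sets (restrict_space borel {0..<1::real})"
    and "weight v" and "weight w"
    and "integrable M (\<lambda>t. 1 / v (complex_of_real t))"
    and "\<forall>r::real. 0 < r \<and> r < 1 \<longrightarrow> w (complex_of_real r) \<le> 1 - r"
  shows "I_mu_well_defined M v w \<and> I_mu_compact M v w"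
proof -
  interpret setting M v w
    using assms by (simp add: setting_def)
  show ?thesis unfolding I_mu_well_defined_def using wd cpt by blast
qed

end
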